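(* Let $A$ be a unital power-associative algebra over a field $F$ of characteristic zero such that $A=F1\oplus N$ as vector spaces, where $N$ is a subalgebra in which every element is nilpotent. Then every Rota–Baxter operator $R$ of nonzero weight $\lambda$ on $A$ is splitting, and, up to replacing $R$ by $\phi(R)=-R-\lambda\,\mathrm{id}$, we have $R(1)=0$.
   Context: A linear operator $R\colon A\to A$ is a Rota–Baxter operator of weight $\lambda$ if $R(x)R(y)=R(R(x)y+xR(y)+\lambda xy)$ for all $x,y\in A$; then $\phi(R)=-R-\lambda\,\mathrm{id}$ is also an RB-operator of weight $\lambda$. An algebra is power-associative if every element generates an associative subalgebra. An RB-operator $R$ of weight $\lambda$ is splitting if $A=A_1\oplus A_2$ as vector spaces for subalgebras $A_1,A_2$ and $R(a_1+a_2)=-\lambda a_2$ for $a_1\in A_1,a_2\in A_2$. *)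

theory Defs
  imports Main
begin

definition is_algebra :: "('k::field \<Rightarrow> 'a::ab_group_add \<Rightarrow> 'a) \<Rightarrow> ('a \<Rightarrow> 'a \<Rightarrow> 'a) \<Rightarrow> bool" where
  "is_algebra smul mult \<longleftrightarrow>
     (\<forall>c x y. smul c (x + y) = smul c x + smul c y) \<and>
     (\<forall>c d x. smul (c + d) x = smul c x + smul d x) \<and>
     (\<forall>c d x. smul c (smul d x) = smul (c * d) x) \<and>
     (\<forall>x. smul 1 x = x) \<and>
     (\<forall>x y z. mult (x + y) z = mult x z + mult y z) \<and>
     (\<forall>x y z. mult x (y + z) = mult x y + mult x z) \<and>
     (\<forall>c x y. mult (smul c x) y = smul c (mult x y)) \<and>
     (\<forall>c x y. mult x (smul c y) = smul c (mult x y))"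

definition is_unit :: "('a \<Rightarrow> 'a \<Rightarrow> 'a) \<Rightarrow> 'a \<Rightarrow> bool" where
  "is_unit mult e \<longleftrightarrow> (\<forall>x. mult e x = x \<and> mult x e = x)"

definition is_subspace :: "('k::field \<Rightarrow> 'a::ab_group_add \<Rightarrow> 'a) \<Rightarrow> 'a set \<Rightarrow> bool" where
  "is_subspace smul S \<longleftrightarrow> 0 \<in> S \<and> (\<forall>x\<in>S. \<forall>y\<in>S. x + y \<in> S) \<and> (\<forall>c. \<forall>x\<in>S. smul c x \<in> S)"

definition is_subalgebra :: "('k::field \<Rightarrow> 'a::ab_group_add \<Rightarrow> 'a) \<Rightarrow> ('a \<Rightarrow> 'a \<Rightarrow> 'a) \<Rightarrow> 'a set \<Rightarrow> bool" where
  "is_subalgebra smul mult S \<longleftrightarrow> is_subspace smul S \<and> (\<forall>x\<in>S. \<forall>y\<in>S. mult x y \<in> S)"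

definition gen_subalgebra :: "('k::field \<Rightarrow> 'a::ab_group_add \<Rightarrow> 'a) \<Rightarrow> ('a \<Rightarrow> 'a \<Rightarrow> 'a) \<Rightarrow> 'a \<Rightarrow> 'a set" where
  "gen_subalgebra smul mult x = \<Inter> {S. is_subalgebra smul mult S \<and> x \<in> S}"

definition assoc_on :: "('a \<Rightarrow> 'a \<Rightarrow> 'a) \<Rightarrow> 'a set \<Rightarrow> bool" where
  "assoc_on mult S \<longleftrightarrow> (\<forall>x\<in>S. \<forall>y\<in>S. \<forall>z\<in>S. mult (mult x y) z = mult x (mult y z))"

definition power_associative :: "('k::field \<Rightarrow> 'a::ab_group_add \<Rightarrow> 'a) \<Rightarrow> ('a \<Rightarrow> 'a \<Rightarrow> 'a) \<Rightarrow> bool" where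
  "power_associative smul mult \<longleftrightarrow> (\<forall>x. assoc_on mult (gen_subalgebra smul mult x))"

fun apow :: "('a \<Rightarrow> 'a \<Rightarrow> 'a) \<Rightarrow> 'a \<Rightarrow> nat \<Rightarrow> 'a" where
  "apow mult x 0 = x"
| "apow mult x (Suc n) = mult (apow mult x n) x"
(* apow mult x n is x^(n+1) *)

definition nilpotent_elem :: "('a::zero \<Rightarrow> 'a \<Rightarrow> 'a) \<Rightarrow> 'a \<Rightarrow> bool" where
  "nilpotent_elem mult x \<longleftrightarrow> (\<exists>n. apow mult x n = 0)"

definition is_linear :: "('k::field \<Rightarrow> 'a::ab_group_add \<Rightarrow> 'a) \<Rightarrow> ('a \<Rightarrow> 'a) \<Rightarrow> bool" where
  "is_linear smul R \<longleftrightarrow> (\<forall>x y. R (x + y) = R x + R y) \<and> (\<forall>c x. R (smul c x) = smul c (R x))"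

definition rota_baxter :: "('k::field \<Rightarrow> 'a::ab_group_add \<Rightarrow> 'a) \<Rightarrow> ('a \<Rightarrow> 'a \<Rightarrow> 'a) \<Rightarrow> 'k \<Rightarrow> ('a \<Rightarrow> 'a) \<Rightarrow> bool" where
  "rota_baxter smul mult lam R \<longleftrightarrow> is_linear smul R \<and>
     (\<forall>x y. mult (R x) (R y) = R (mult (R x) y + mult x (R y) + smul lam (mult x y)))"

definition phi_RB :: "('k::field \<Rightarrow> 'a::ab_group_add \<Rightarrow> 'a) \<Rightarrow> 'k \<Rightarrow> ('a \<Rightarrow> 'a) \<Rightarrow> ('a \<Rightarrow> 'a)" where
  "phi_RB smul lam R = (\<lambda>x. - R x - smul lam x)"

definition splitting_RB :: "('k::field \<Rightarrow> 'a::ab_group_add \<Rightarrow> 'a) \<Rightarrow> ('a \<Rightarrow> 'a \<Rightarrow> 'a) \<Rightarrow> 'k \<Rightarrow> ('a \<Rightarrow> 'a) \<Rightarrow> bool" where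
  "splitting_RB smul mult lam R \<longleftrightarrow>
     (\<exists>A1 A2. is_subalgebra smul mult A1 \<and> is_subalgebra smul mult A2 \<and>
        (\<forall>a. \<exists>a1\<in>A1. \<exists>a2\<in>A2. a = a1 + a2) \<and> A1 \<inter> A2 = {0} \<and>
        (\<forall>a1\<in>A1. \<forall>a2\<in>A2. R (a1 + a2) = - smul lam a2))"

end

theory Submission imports Defs begin

fun lmul :: "('a \<Rightarrow> 'a \<Rightarrow> 'a) \<Rightarrow> 'a \<Rightarrow> 'a \<Rightarrow> nat \<Rightarrow> 'a" where
  "lmul mult a b 0 = a"
| "lmul mult a b (Suc j) = mult (lmul mult a b j) b"

lemma down_zero:
  fixes f :: "nat \<Rightarrow> 'a::ab_group_add"
  assumes r: "\<And>j. f j = - f (Suc j)" and z: "\<And>j. K \<le> j \<Longrightarrow> f j = 0"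
  shows "f j = 0"
proof -
  have "\<forall>j. K \<le> j + i \<longrightarrow> f j = 0" for i
  proof (induct i)
    case 0 then show ?case using z by simp
  next
    case (Suc i)
    then show ?case using r by (metis add_Suc add_Suc_shift minus_zero)
  qed
  then show ?thesis by (metis le_add2)
qed

locale alg_ctx =
  fixes smul :: "'k::field \<Rightarrow> 'a::ab_group_add \<Rightarrow> 'a" and mult :: "'a \<Rightarrow> 'a \<Rightarrow> 'a" and one :: 'a
  assumes alg: "is_algebra smul mult" and unit: "is_unit mult one"
begin

lemma smul_add: "smul c (x + y) = smul c x + smul c y" using alg unfolding is_algebra_def by auto
lemma add_smul: "smul (c + d) x = smul c x + smul d x" using alg unfolding is_algebra_def by auto
lemma smul_smul: "smul c (smul d x) = smul (c*d) x" using alg unfolding is_algebra_def by auto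
lemma smul_one: "smul 1 x = x" using alg unfolding is_algebra_def by auto
lemma mult_add_left: "mult (x + y) z = mult x z + mult y z" using alg unfolding is_algebra_def by auto
lemma mult_add_right: "mult x (y + z) = mult x y + mult x z" using alg unfolding is_algebra_def by auto
lemma mult_smul_left: "mult (smul c x) y = smul c (mult x y)" using alg unfolding is_algebra_def by auto
lemma mult_smul_right: "mult x (smul c y) = smul c (mult x y)" using alg unfolding is_algebra_def by auto
lemma one_mult: "mult one x = x" using unit unfolding is_unit_def by blast
lemma mult_one: "mult x one = x" using unit unfolding is_unit_def by blast

lemma smul_zero: "smul c 0 = 0"
  using smul_add[of c 0 0] by simp
lemma zero_smul: "smul 0 x = 0"
  using add_smul[of 0 0 x] by simp
lemma smul_minus: "smul c (-x) = - smul c x"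
  using smul_add[of c "-x" x] smul_zero by (simp add: eq_neg_iff_add_eq_0)
lemma smul_diff: "smul c (x - y) = smul c x - smul c y"
  using smul_add[of c x "-y"] smul_minus by simp
lemma minus_smul: "smul (-c) x = - smul c x"
  using add_smul[of "-c" c x] zero_smul by (simp add: eq_neg_iff_add_eq_0)
lemma diff_smul: "smul (c - d) x = smul c x - smul d x"
  using add_smul[of c "-d" x] minus_smul by simp
lemma mult_zero_left: "mult 0 x = 0"
  using mult_add_left[of 0 0 x] by simp
lemma mult_zero_right: "mult x 0 = 0"
  using mult_add_right[of x 0 0] by simp
lemma mult_minus_left: "mult (-x) y = - mult x y"
  using mult_add_left[of "-x" x y] mult_zero_left by (simp add: eq_neg_iff_add_eq_0)
lemma mult_minus_right: "mult x (-y) = - mult x y"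
  using mult_add_right[of x "-y" y] mult_zero_right by (simp add: eq_neg_iff_add_eq_0)
lemma mult_diff_left: "mult (x - y) z = mult x z - mult y z"
  using mult_add_left[of x "-y" z] mult_minus_left by simp
lemma mult_diff_right: "mult x (y - z) = mult x y - mult x z"
  using mult_add_right[of x y "-z"] mult_minus_right by simp

lemmas asimps = smul_add smul_smul smul_one mult_add_left mult_add_right mult_smul_left mult_smul_right
  one_mult mult_one smul_zero zero_smul smul_minus smul_diff mult_zero_left mult_zero_right
  mult_minus_left mult_minus_right mult_diff_left mult_diff_right

definition wRB :: "('a \<Rightarrow> 'a) \<Rightarrow> bool" where
  "wRB P \<longleftrightarrow> (\<forall>x y. P (x + y) = P x + P y) \<and> (\<forall>c x. P (smul c x) = smul c (P x)) \<and>
     (\<forall>x y. mult (P x) (P y) = P (mult (P x) y + mult x (P y) - mult x y))"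

context fixes P assumes wP: "wRB P"
begin
lemma P_add: "P (x + y) = P x + P y" using wP unfolding wRB_def by blast
lemma P_smul: "P (smul c x) = smul c (P x)" using wP unfolding wRB_def by blast
lemma P_RB: "mult (P x) (P y) = P (mult (P x) y + mult x (P y) - mult x y)" using wP unfolding wRB_def by blast
lemma P_zero: "P 0 = 0" using P_add[of 0 0] by simp
lemma P_minus: "P (-x) = - P x" using P_add[of "-x" x] P_zero by (simp add: eq_neg_iff_add_eq_0)
lemma P_diff: "P (x - y) = P x - P y" using P_add[of x "-y"] P_minus by simp
end

lemma Q_wRB: assumes "wRB P" shows "wRB (\<lambda>x. x - P x)"
proof -
  note Ps = P_add[OF assms] P_smul[OF assms] P_diff[OF assms] P_minus[OF assms]
  show ?thesis unfolding wRB_def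
  proof (intro conjI allI)
    fix x y
    have e: "mult (P x) (P y) = P (mult (P x) y) + P (mult x (P y)) - P (mult x y)"
      using P_RB[OF assms, of x y] by (simp add: Ps)
    show "mult (x - P x) (y - P y) =
      (mult (x - P x) y + mult x (y - P y) - mult x y) - P (mult (x - P x) y + mult x (y - P y) - mult x y)"
      by (simp add: asimps Ps e algebra_simps)
  qed (auto simp: Ps asimps algebra_simps)
qed

lemma lmul_add: "lmul mult (x + y) b j = lmul mult x b j + lmul mult y b j"
  by (induct j) (simp_all add: mult_add_left)
lemma lmul_smul: "lmul mult (smul c x) b j = smul c (lmul mult x b j)"
  by (induct j) (simp_all add: mult_smul_left)
lemma lmul_one: "lmul mult one n (Suc j) = apow mult n j"
  by (induct j) (simp_all add: one_mult)
lemma lmul_self: "lmul mult n n j = apow mult n j"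
  by (induct j) simp_all
lemma lmul_decomp: "lmul mult (smul c one + n) n (Suc j) = smul c (apow mult n j) + apow mult n (Suc j)"
  by (simp only: lmul_add lmul_smul lmul_one lmul_self)
lemma apow_zero_ge: "apow mult n K = 0 \<Longrightarrow> K \<le> k \<Longrightarrow> apow mult n k = 0"
  by (induct k) (auto simp: le_Suc_eq mult_zero_left)
lemma one_zero_triv: "one = 0 \<Longrightarrow> (x::'a) = 0"
  using one_mult[of x] mult_zero_left[of x] by simp
lemma smul_one_zero: "smul d one = 0 \<Longrightarrow> d \<noteq> 0 \<Longrightarrow> one = 0"
  using smul_smul[of "inverse d" d one] smul_zero smul_one by simp

lemma key:
  assumes wP: "wRB P"
    and dec: "\<forall>a. \<exists>c m. a = smul c one + m \<and> (\<exists>K. apow mult m K = 0)"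
    and u: "P x0 = one + n" and nn: "apow mult n M = 0"
  shows "P one = one"
proof (cases "one = 0")
  case True
  then show ?thesis using one_zero_triv by blast
next
  case False
  note Ps = P_add[OF wP] P_smul[OF wP] P_diff[OF wP] P_minus[OF wP] P_zero[OF wP]
  have cl_mult: "mult a b \<in> range P" if "a \<in> range P" "b \<in> range P" for a b
    using that P_RB[OF wP] by auto
  have cl_add: "a + b \<in> range P" if "a \<in> range P" "b \<in> range P" for a b
    using that Ps(1) by (auto simp del: Ps(1) simp: Ps(1)[symmetric])
  have cl_diff: "a - b \<in> range P" if "a \<in> range P" "b \<in> range P" for a b
    using that Ps(3) by (auto simp del: Ps(3) simp: Ps(3)[symmetric])
  have cl_smul: "smul c a \<in> range P" if "a \<in> range P" for a c
    using that Ps(2) by (auto simp del: Ps(2) simp: Ps(2)[symmetric])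
  have uP: "one + n \<in> range P" using u by (metis rangeI)
  have g: "lmul mult (one + n) n j \<in> range P" for j
  proof (induct j)
    case 0 then show ?case using uP by simp
  next
    case (Suc j)
    let ?g = "lmul mult (one + n) n j"
    have "mult ?g n = mult ?g (one + n) - ?g" by (simp add: mult_add_right mult_one)
    then show ?case using Suc cl_mult[OF Suc uP] cl_diff by simp
  qed
  have dec1: "lmul mult (one + n) n (Suc k) = apow mult n k + apow mult n (Suc k)" for k
    using lmul_decomp[of 1 n k] by (simp add: smul_one)
  have t: "one + smul ((-1)^k) (apow mult n k) \<in> range P" for k
  proof (induct k)
    case 0 then show ?case using uP by (simp add: smul_one)
  next
    case (Suc k)
    have eq: "one + smul ((-1)^(Suc k)) (apow mult n (Suc k)) =
      (one + smul ((-1)^k) (apow mult n k)) + smul ((-1)^(Suc k)) (lmul mult (one + n) n (Suc k))"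
      by (simp only: dec1 smul_add minus_smul power_Suc mult_minus1) (simp add: algebra_simps)
    show ?case unfolding eq by (rule cl_add[OF Suc cl_smul[OF g]])
  qed
  have "one \<in> range P" using t[of M] nn by (simp add: smul_zero)
  then obtain z where z: "P z = one" by auto
  have s3: "P (mult w z) = P (mult (P w) z)" for w
    using P_RB[OF wP, of w z] by (simp add: z mult_one Ps)
  obtain c m K where zd: "z = smul c one + m" and mK: "apow mult m K = 0" using dec by blast
  have w: "P (lmul mult z m j) = smul ((1-c)^j) one" for j
  proof (induct j)
    case 0 then show ?case using z by (simp add: smul_one)
  next
    case (Suc j)
    let ?w = "lmul mult z m j"
    have e1: "mult ?w z = smul c ?w + mult ?w m" unfolding zd
      by (simp only: mult_add_right mult_smul_right mult_one)
    have "mult ?w m = mult ?w z - smul c ?w" using e1 by simp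
    then have "P (mult ?w m) = P (mult ?w z) - smul c (P ?w)" by (simp add: Ps)
    also have "\<dots> = P (mult (P ?w) z) - smul c (P ?w)" by (simp only: s3[of ?w])
    also have "\<dots> = smul ((1-c)^j) one - smul c (smul ((1-c)^j) one)"
      by (simp only: Suc mult_smul_left one_mult Ps(2) z)
    also have "\<dots> = smul ((1-c)^(Suc j)) one"
      by (simp only: smul_smul diff_smul[symmetric]) (simp add: algebra_simps)
    finally show ?case by (simp only: lmul.simps)
  qed
  have lK: "lmul mult z m (Suc K) = 0" unfolding zd lmul_decomp using mK
    by (simp add: smul_zero mult_zero_left)
  have "smul ((1-c)^(Suc K)) one = 0" using w[of "Suc K"] unfolding lK Ps(5) by (rule sym)
  then have "(1-c)^(Suc K) = 0" using smul_one_zero False by blast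
  then have c1: "c = 1" by auto
  have rec: "P (apow mult m j) = - P (apow mult m (Suc j))" for j
  proof -
    have "P (lmul mult z m (Suc j)) = 0" unfolding w c1 by (simp add: zero_smul)
    moreover have "lmul mult z m (Suc j) = apow mult m j + apow mult m (Suc j)"
      unfolding zd c1 using lmul_decomp[of 1 m j] by (simp only: smul_one)
    ultimately have "P (apow mult m j) + P (apow mult m (Suc j)) = 0" by (simp only: Ps(1))
    then show ?thesis by (simp add: eq_neg_iff_add_eq_0)
  qed
  have Pm0: "P (apow mult m 0) = 0"
    by (rule down_zero[where f="\<lambda>j. P (apow mult m j)" and K=K]) (rule rec, simp add: apow_zero_ge[OF mK] Ps(5))
  then have Pm: "P m = 0" by simp
  have "P z = P one + P m" unfolding zd c1 smul_one by (rule Ps(1))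
  then have "one = P one + 0" unfolding z Pm .
  then show ?thesis by (metis add.right_neutral)
qed

end

theorem theorem9:
  fixes smul :: "'k::field_char_0 \<Rightarrow> 'a::ab_group_add \<Rightarrow> 'a"
    and mult :: "'a \<Rightarrow> 'a \<Rightarrow> 'a"
    and one :: 'a
    and N :: "'a set"
    and R :: "'a \<Rightarrow> 'a"
    and lam :: 'k
  assumes alg: "is_algebra smul mult"
    and unit: "is_unit mult one"
    and pa: "power_associative smul mult"
    and N_sub: "is_subalgebra smul mult N"
    and N_nil: "\<forall>x\<in>N. nilpotent_elem mult x"
    and dsum: "\<forall>a. \<exists>c. \<exists>n\<in>N. a = smul c one + n"
    and dsum0: "\<forall>c. smul c one \<in> N \<longrightarrow> smul c one = 0"
    and lam_nz: "lam \<noteq> 0"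
    and RB: "rota_baxter smul mult lam R"
  shows "splitting_RB smul mult lam R \<and> (R one = 0 \<or> phi_RB smul lam R one = 0)"
proof -
  interpret A: alg_ctx smul mult one using alg unit by unfold_locales
  have R_add: "R (x + y) = R x + R y" for x y using RB unfolding rota_baxter_def is_linear_def by blast
  have R_smul: "R (smul c x) = smul c (R x)" for c x using RB unfolding rota_baxter_def is_linear_def by blast
  have R_RB: "mult (R x) (R y) = R (mult (R x) y + mult x (R y) + smul lam (mult x y))" for x y
    using RB unfolding rota_baxter_def by blast
  define a where "a = - inverse lam"
  define P where "P = (\<lambda>x. smul a (R x))"
  have al: "a * lam = -1" unfolding a_def using lam_nz by simp
  have wP: "A.wRB P" unfolding A.wRB_def
  proof (intro conjI allI)
    fix x y
    show "P (x + y) = P x + P y" unfolding P_def by (simp add: R_add A.smul_add)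
  next
    fix c x
    show "P (smul c x) = smul c (P x)" unfolding P_def by (simp add: R_smul A.smul_smul mult.commute)
  next
    fix x y
    let ?W = "mult (R x) y + mult x (R y) + smul lam (mult x y)"
    have "mult (P x) y + mult x (P y) - mult x y = smul a ?W"
      unfolding P_def by (simp add: A.smul_add A.mult_smul_left A.mult_smul_right A.smul_smul al
          A.minus_smul A.smul_one)
    then have "P (mult (P x) y + mult x (P y) - mult x y) = smul (a * a) (R ?W)"
      unfolding P_def by (simp add: R_smul A.smul_smul)
    moreover have "mult (P x) (P y) = smul (a * a) (R ?W)"
      unfolding P_def by (simp add: A.mult_smul_left A.mult_smul_right A.smul_smul R_RB[symmetric])
    ultimately show "mult (P x) (P y) = P (mult (P x) y + mult x (P y) - mult x y)" by simp
  qed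
  have RP: "R x = smul (- lam) (P x)" for x
    unfolding P_def a_def using lam_nz by (simp add: A.smul_smul A.smul_one)
  have dec: "\<forall>b. \<exists>c m. b = smul c one + m \<and> (\<exists>K. apow mult m K = 0)"
    using dsum N_nil unfolding nilpotent_elem_def by blast
  have Nsm: "smul c x \<in> N" if "x \<in> N" for c x
    using N_sub that unfolding is_subalgebra_def is_subspace_def by blast
  obtain \<alpha> n0 where P1: "P one = smul \<alpha> one + n0" and n0N: "n0 \<in> N" using dsum by blast
  have hP1: "P one = one \<or> P one = 0"
  proof (cases "\<alpha> = 0")
    case False
    have "P (smul (inverse \<alpha>) one) = one + smul (inverse \<alpha>) n0"
      using False by (simp add: A.P_smul[OF wP] P1 A.smul_add A.smul_smul A.smul_one)
    moreover obtain M where "apow mult (smul (inverse \<alpha>) n0) M = 0"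
      using N_nil Nsm[OF n0N] unfolding nilpotent_elem_def by blast
    ultimately show ?thesis using A.key[OF wP dec] by blast
  next
    case True
    have wQ: "A.wRB (\<lambda>x. x - P x)" by (rule A.Q_wRB[OF wP])
    have "one - P one = one + smul (-1) n0"
      using True by (simp add: P1 A.zero_smul A.minus_smul A.smul_one)
    moreover obtain M where "apow mult (smul (-1) n0) M = 0"
      using N_nil Nsm[OF n0N] unfolding nilpotent_elem_def by blast
    ultimately have "one - P one = one" using A.key[OF wQ dec] by blast
    then show ?thesis by simp
  qed
  note Ps = A.P_add[OF wP] A.P_smul[OF wP] A.P_diff[OF wP] A.P_minus[OF wP] A.P_zero[OF wP]
  have idem: "P (P x) = P x" for x
  proof -
    have e: "mult (P x) (P one) = P (mult (P x) one + mult x (P one) - mult x one)"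
      by (rule A.P_RB[OF wP])
    from hP1 show ?thesis
    proof
      assume h: "P one = one"
      from e show ?thesis unfolding h A.mult_one by simp
    next
      assume h: "P one = 0"
      from e have "0 = P (P x) - P x" unfolding h A.mult_one A.mult_zero_right by (simp add: Ps)
      then show ?thesis by simp
    qed
  qed
  define A1 where "A1 = {x. P x = 0}"
  define A2 where "A2 = {x. P x = x}"
  have sub1: "is_subalgebra smul mult A1"
    unfolding is_subalgebra_def is_subspace_def A1_def
  proof (intro conjI ballI allI; simp?)
    show "P 0 = 0" by (rule Ps(5))
  next
    fix x y assume "P x = 0" "P y = 0"
    then show "P (x + y) = 0" by (simp add: Ps)
  next
    fix c x assume "P x = 0"
    then show "P (smul c x) = 0" by (simp add: Ps A.smul_zero)
  next
    fix x y assume h: "P x = 0" "P y = 0"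
    have "mult (P x) (P y) = P (mult (P x) y + mult x (P y) - mult x y)" by (rule A.P_RB[OF wP])
    then have "0 = - P (mult x y)" unfolding h by (simp add: A.mult_zero_left A.mult_zero_right Ps)
    then show "P (mult x y) = 0" by simp
  qed
  have sub2: "is_subalgebra smul mult A2"
    unfolding is_subalgebra_def is_subspace_def A2_def
  proof (intro conjI ballI allI; simp?)
    show "P 0 = 0" by (rule Ps(5))
  next
    fix x y assume "P x = x" "P y = y"
    then show "P (x + y) = x + y" by (simp add: Ps)
  next
    fix c x assume "P x = x"
    then show "P (smul c x) = smul c x" by (simp add: Ps)
  next
    fix x y assume h: "P x = x" "P y = y"
    have "mult (P x) (P y) = P (mult (P x) y + mult x (P y) - mult x y)" by (rule A.P_RB[OF wP])
    then show "P (mult x y) = mult x y" unfolding h by simp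
  qed
  have split: "splitting_RB smul mult lam R"
    unfolding splitting_RB_def
  proof (intro exI conjI allI ballI)
    show "is_subalgebra smul mult A1" by (rule sub1)
    show "is_subalgebra smul mult A2" by (rule sub2)
  next
    fix b
    have "b - P b \<in> A1" unfolding A1_def by (simp add: Ps idem)
    moreover have "P b \<in> A2" unfolding A2_def by (simp add: idem)
    moreover have "b = (b - P b) + P b" by simp
    ultimately show "\<exists>a1\<in>A1. \<exists>a2\<in>A2. b = a1 + a2" by blast
  next
    show "A1 \<inter> A2 = {0}" unfolding A1_def A2_def using Ps(5) by auto
  next
    fix a1 a2 assume "a1 \<in> A1" "a2 \<in> A2"
    then have "P a1 = 0" "P a2 = a2" unfolding A1_def A2_def by auto
    then show "R (a1 + a2) = - smul lam a2" unfolding RP by (simp add: Ps A.minus_smul)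
  qed
  have "R one = 0 \<or> phi_RB smul lam R one = 0"
    using hP1 unfolding phi_RB_def RP by (auto simp: A.minus_smul A.smul_zero)
  with split show ?thesis by blast
qed

end
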